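(* Let $I\subset K[x,y]$ be a monomial ideal with $G(I)=\{u_0,\ldots,u_m\}$, $u_i=x^{a_i}y^{b_i}$, ordered so that $a_0>\cdots>a_m$ and $b_0<\cdots<b_m$, and write $I=x^{a_m}y^{b_0}J$ (so $J$ is the monomial ideal generated by $u_i/(x^{a_m}y^{b_0})$, $i=0,\dots,m$). Then $I$ is componentwise polymatroidal if and only if $J$ is a $yx$-tight ideal.
   Context: A monomial ideal generated in a single degree is polymatroidal if for all $u,v\in G(I)$ and all variables $z$ with $\deg_{z}(u)>\deg_{z}(v)$ there exists a variable $w$ with $\deg_{w}(u)<\deg_{w}(v)$ and $w(u/z)\in I$ ($\deg_z$ = exponent of $z$, $G(\cdot)$ = minimal monomial generating set). $I_{\langle j\rangle}$ is the ideal generated by all degree-$j$ monomials of $I$; $I$ is componentwise polymatroidal if every nonzero $I_{\langle j\rangle}$ is polymatroidal. Let $J\subset K[x,y]$ be a $(x,y)$-primary monomial ideal with $G(J)=\{x^{\alpha_i}y^{\beta_i}: i=0,\ldots,m\}$ ordered so that $\alpha_0>\cdots>\alpha_m=0$ and $0=\beta_0<\cdots<\beta_m$. $J$ is $x$-tight if $\alpha_{m-i}=i$ for all $i=0,\ldots,m$; $y$-tight if $\beta_i=i$ for all $i=0,\ldots,m$; $yx$-tight if there exists $0\le j\le m$ with $\beta_i=i$ for all $i=0,\ldots,j$ and $\alpha_{m-i}=i$ for all $i=0,\ldots,m-j$. *)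

theory Defs
  imports Main
begin

text \<open>Monomials of K[x,y] are represented by their exponent vectors (a,b) for x^a y^b.
A monomial ideal is determined by the set of monomials it contains (an upward closed
set w.r.t. divisibility); the coefficient field K plays no role.\<close>

type_synonym mono = "nat \<times> nat"

definition mdvd :: "mono \<Rightarrow> mono \<Rightarrow> bool" where
  "mdvd u v \<longleftrightarrow> fst u \<le> fst v \<and> snd u \<le> snd v"

definition is_monomial_ideal :: "mono set \<Rightarrow> bool" where
  "is_monomial_ideal I \<longleftrightarrow> (\<forall>u\<in>I. \<forall>v. mdvd u v \<longrightarrow> v \<in> I)"

definition ideal_gen :: "mono set \<Rightarrow> mono set" where
  "ideal_gen S = {v. \<exists>u\<in>S. mdvd u v}"

definition gens :: "mono set \<Rightarrow> mono set" where
  "gens I = {u\<in>I. \<forall>v\<in>I. mdvd v u \<longrightarrow> v = u}"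

definition mdeg :: "mono \<Rightarrow> nat" where
  "mdeg u = fst u + snd u"

definition component :: "mono set \<Rightarrow> nat \<Rightarrow> mono set" where
  "component I j = ideal_gen {u\<in>I. mdeg u = j}"

text \<open>Variables: True = x, False = y.\<close>
definition vdeg :: "bool \<Rightarrow> mono \<Rightarrow> nat" where
  "vdeg z u = (if z then fst u else snd u)"

definition mul_var :: "bool \<Rightarrow> mono \<Rightarrow> mono" where
  "mul_var w u = (if w then (fst u + 1, snd u) else (fst u, snd u + 1))"

definition div_var :: "bool \<Rightarrow> mono \<Rightarrow> mono" where
  "div_var z u = (if z then (fst u - 1, snd u) else (fst u, snd u - 1))"

definition polymatroidal :: "mono set \<Rightarrow> bool" where
  "polymatroidal I \<longleftrightarrow>
     (\<exists>d. \<forall>u\<in>gens I. mdeg u = d) \<and>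
     (\<forall>u\<in>gens I. \<forall>v\<in>gens I. \<forall>z. vdeg z u > vdeg z v \<longrightarrow>
        (\<exists>w. vdeg w u < vdeg w v \<and> mul_var w (div_var z u) \<in> I))"

definition componentwise_polymatroidal :: "mono set \<Rightarrow> bool" where
  "componentwise_polymatroidal I \<longleftrightarrow>
     (\<forall>j. component I j \<noteq> {} \<longrightarrow> polymatroidal (component I j))"

definition yx_tight :: "mono set \<Rightarrow> bool" where
  "yx_tight J \<longleftrightarrow> is_monomial_ideal J \<and>
     (\<exists>m \<alpha> \<beta>. gens J = {(\<alpha> i, \<beta> i) | i. i \<le> m} \<and> J = ideal_gen (gens J) \<and>
        (\<forall>i<m. \<alpha> (Suc i) < \<alpha> i) \<and> \<alpha> m = 0 \<and>
        (\<forall>i<m. \<beta> i < \<beta> (Suc i)) \<and> \<beta> 0 = 0 \<and>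
        (\<exists>j\<le>m. (\<forall>i\<le>j. \<beta> i = i) \<and> (\<forall>i\<le>m - j. \<alpha> (m - i) = i)))"

end

theory Submission
  imports Defs
begin

lemma dec_gap:
  assumes "\<forall>i<m. a (Suc i) < (a::nat\<Rightarrow>nat) i" "i \<le> k" "k \<le> m"
  shows "a k + (k - i) \<le> a i"
  using assms(2,3)
proof (induction k)
  case 0 then show ?case by simp
next
  case (Suc k)
  show ?case
  proof (cases "i = Suc k")
    case True then show ?thesis by simp
  next
    case False
    then have "i \<le> k" using Suc.prems by simp
    with Suc.IH Suc.prems have "a k + (k - i) \<le> a i" by simp
    moreover have "a (Suc k) < a k" using assms(1) Suc.prems by simp
    ultimately show ?thesis using \<open>i \<le> k\<close> by simp
  qed
qed

lemma inc_gap: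
  assumes "\<forall>i<m. (b::nat\<Rightarrow>nat) i < b (Suc i)" "i \<le> k" "k \<le> m"
  shows "b i + (k - i) \<le> b k"
  using assms(2,3)
proof (induction k)
  case 0 then show ?case by simp
next
  case (Suc k)
  show ?case
  proof (cases "i = Suc k")
    case True then show ?thesis by simp
  next
    case False
    then have "i \<le> k" using Suc.prems by simp
    with Suc.IH Suc.prems have "b i + (k - i) \<le> b k" by simp
    moreover have "b k < b (Suc k)" using assms(1) Suc.prems by simp
    ultimately show ?thesis using \<open>i \<le> k\<close> by simp
  qed
qed

lemma b_steps:
  assumes "\<forall>r. i \<le> r \<and> r < k \<longrightarrow> (b::nat\<Rightarrow>nat) (Suc r) = b r + 1" "i \<le> k"
  shows "b k = b i + (k - i)"
  using assms
proof (induction k)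
  case 0 then show ?case by simp
next
  case (Suc k)
  show ?case
  proof (cases "i = Suc k")
    case True then show ?thesis by simp
  next
    case False
    then have "i \<le> k" using Suc.prems by simp
    with Suc.IH Suc.prems have "b k = b i + (k - i)" by simp
    moreover have "b (Suc k) = b k + 1" using Suc.prems \<open>i \<le> k\<close> by simp
    ultimately show ?thesis using \<open>i \<le> k\<close> by simp
  qed
qed

lemma a_steps:
  assumes "\<forall>r. i \<le> r \<and> r < k \<longrightarrow> (a::nat\<Rightarrow>nat) r = a (Suc r) + 1" "i \<le> k"
  shows "a i = a k + (k - i)"
  using assms
proof (induction k)
  case 0 then show ?case by simp
next
  case (Suc k)
  show ?case
  proof (cases "i = Suc k")
    case True then show ?thesis by simp
  next
    case False
    then have "i \<le> k" using Suc.prems by simp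
    with Suc.IH Suc.prems have "a i = a k + (k - i)" by simp
    moreover have "a k = a (Suc k) + 1" using Suc.prems \<open>i \<le> k\<close> by simp
    ultimately show ?thesis using \<open>i \<le> k\<close> by simp
  qed
qed

definition memG :: "(nat \<Rightarrow> nat) \<Rightarrow> (nat \<Rightarrow> nat) \<Rightarrow> nat \<Rightarrow> nat \<Rightarrow> nat \<Rightarrow> bool" where
  "memG a b m p s \<longleftrightarrow> (\<exists>i\<le>m. a i \<le> p \<and> b i \<le> s)"

lemma E_noFail:
  assumes dec: "\<forall>i<m. a (Suc i) < a i" and inc: "\<forall>i<m. b i < b (Suc i)"
  and E1: "\<forall>p s q t. memG a b m p s \<and> memG a b m q t \<and> p+s = q+t \<and> q < p \<longrightarrow> memG a b m (p-1) (s+1)"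
  and ik: "i < k" "k \<le> m" and bj: "b i + 2 \<le> b (Suc i)" and ak: "a k + b k + 2 \<le> a i + b (Suc i)"
  shows False
proof -
  define t where "t = max (b i) (a k + b k - a i)"
  have akai: "a k < a i" using dec_gap[OF dec, of i k] ik by simp
  have t1: "t + 2 \<le> b (Suc i)" using bj ak by (simp add: t_def)
  have m1: "memG a b m (a i) t" using ik unfolding memG_def by (intro exI[of _ i]) (auto simp: t_def)
  have m2: "memG a b m (a k) (a i + t - a k)" using ik akai
    unfolding memG_def by (intro exI[of _ k]) (auto simp: t_def)
  have "memG a b m (a i - 1) (t+1)" using E1 m1 m2 akai by fastforce
  then obtain l where l: "l \<le> m" "a l \<le> a i - 1" "b l \<le> t + 1" by (auto simp: memG_def)
  have "i < l"
  proof (rule ccontr)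
    assume "\<not> i < l"
    then have "a i \<le> a l" using dec_gap[OF dec, of l i] ik by simp
    then show False using l akai by simp
  qed
  then have "b (Suc i) \<le> b l" using inc_gap[OF inc, of "Suc i" l] l by simp
  with l t1 show False by simp
qed

definition Tcond :: "(nat \<Rightarrow> nat) \<Rightarrow> (nat \<Rightarrow> nat) \<Rightarrow> nat \<Rightarrow> bool" where
  "Tcond a b m \<longleftrightarrow> (\<exists>j\<le>m. (\<forall>i<j. b (Suc i) = b i + 1) \<and> (\<forall>i. j \<le> i \<and> i < m \<longrightarrow> a i = a (Suc i) + 1))"

lemma E_T:
  assumes dec: "\<forall>i<m. a (Suc i) < a i" and inc: "\<forall>i<m. b i < b (Suc i)"
  and E1: "\<forall>p s q t. memG a b m p s \<and> memG a b m q t \<and> p+s = q+t \<and> q < p \<longrightarrow> memG a b m (p-1) (s+1)"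
  shows "Tcond a b m"
proof -
  have nf: "\<And>i k. i<k \<Longrightarrow> k\<le>m \<Longrightarrow> b i + 2 \<le> b (Suc i) \<Longrightarrow> a k + b k + 2 \<le> a i + b (Suc i) \<Longrightarrow> False"
    using E_noFail[OF dec inc E1] by blast
  define P where "P = (\<lambda>j. m \<le> j \<or> b (Suc j) \<noteq> b j + 1)"
  define j where "j = (LEAST j. P j)"
  have Pm: "P m" by (simp add: P_def)
  have jm: "j \<le> m" unfolding j_def using Pm by (rule Least_le)
  have Pj: "P j" unfolding j_def using Pm by (rule LeastI)
  have lowj: "\<forall>i<j. b (Suc i) = b i + 1"
  proof (intro allI impI)
    fix i assume "i < j"
    then have "\<not> P i" unfolding j_def by (rule not_less_Least)
    then show "b (Suc i) = b i + 1" by (simp add: P_def)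
  qed
  have highj: "\<forall>s. j \<le> s \<and> s < m \<longrightarrow> a s = a (Suc s) + 1"
  proof (intro allI impI)
    fix s assume s: "j \<le> s \<and> s < m"
    show "a s = a (Suc s) + 1"
    proof (rule ccontr)
      assume ne: "a s \<noteq> a (Suc s) + 1"
      have as2: "a (Suc s) + 2 \<le> a s" using dec s ne by (metis Suc_leI add_2_eq_Suc' add_Suc_right le_antisym not_less_eq_eq order_less_imp_le Suc_eq_plus1 less_Suc_eq_le)
      define D where "D = {i. j \<le> i \<and> i \<le> s \<and> b (Suc i) \<noteq> b i + 1}"
      have finD: "finite D" unfolding D_def by (rule finite_subset[of _ "{..s}"]) auto
      have jD: "j \<in> D" using Pj s by (auto simp: D_def P_def)
      define i0 where "i0 = Max D"
      have i0D: "i0 \<in> D" unfolding i0_def using finD jD Max_in by blast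
      have i0s: "j \<le> i0" "i0 \<le> s" using i0D by (auto simp: D_def)
      have bi0: "b i0 + 2 \<le> b (Suc i0)" using i0D inc i0s s
        by (simp add: D_def) (metis Suc_leI add_2_eq_Suc' add_Suc_right le_antisym not_less_eq_eq Suc_eq_plus1 le_less_trans)
      have above: "\<forall>r. Suc i0 \<le> r \<and> r < Suc s \<longrightarrow> b (Suc r) = b r + 1"
      proof (intro allI impI)
        fix r assume r: "Suc i0 \<le> r \<and> r < Suc s"
        have "r \<notin> D"
        proof
          assume "r \<in> D"
          then have "r \<le> i0" unfolding i0_def using finD Max_ge by blast
          then show False using r by simp
        qed
        then show "b (Suc r) = b r + 1" using r i0s by (auto simp: D_def)
      qed
      have bs: "b (Suc s) = b (Suc i0) + (Suc s - Suc i0)"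
        using b_steps[OF above] i0s by simp
      have ag: "a s + (s - i0) \<le> a i0" using dec_gap[OF dec, of i0 s] i0s s by simp
      have "a (Suc s) + b (Suc s) + 2 \<le> a i0 + b (Suc i0)" using bs ag as2 i0s by simp
      then show False using nf[of i0 "Suc s"] bi0 i0s s by simp
    qed
  qed
  show ?thesis unfolding Tcond_def using jm lowj highj by blast
qed


lemma T_E1:
  assumes dec: "\<forall>i<m. a (Suc i) < a i" and inc: "\<forall>i<m. b i < b (Suc i)"
  and T: "j \<le> m" "\<forall>i<j. b (Suc i) = b i + 1" "\<forall>i. j \<le> i \<and> i < m \<longrightarrow> a i = a (Suc i) + 1"
  and mp: "memG a b m p s" and mq: "memG a b m q t" and eq: "p+s = q+t" and qp: "q < p"
  shows "memG a b m (p-1) (s+1)"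
proof -
  obtain i where i: "i \<le> m" "a i \<le> p" "b i \<le> s" using mp by (auto simp: memG_def)
  obtain k where k: "k \<le> m" "a k \<le> q" "b k \<le> t" using mq by (auto simp: memG_def)
  show ?thesis
  proof (cases "a i < p")
    case True then show ?thesis using i unfolding memG_def by (intro exI[of _ i]) auto
  next
    case False then have ai: "a i = p" using i by simp
    have ik: "i < k"
    proof (rule ccontr)
      assume "\<not> i < k"
      then have "a i \<le> a k" using dec_gap[OF dec, of k i] i by simp
      then show False using ai k qp by simp
    qed
    then have im: "i < m" using k by simp
    have ai1: "a (Suc i) < p" using dec ai im by auto
    have "b (Suc i) \<le> s + 1"
    proof (cases "i < j")
      case True then show ?thesis using T(2) i by auto
    next
      case False
      have st: "\<forall>r. i \<le> r \<and> r < k \<longrightarrow> a r = a (Suc r) + 1" using T(3) False k by auto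
      have "a i = a k + (k - i)" using a_steps[OF st] ik by simp
      moreover have "b (Suc i) + (k - Suc i) \<le> b k" using inc_gap[OF inc, of "Suc i" k] ik k by simp
      ultimately show ?thesis using k eq ai ik by linarith
    qed
    then show ?thesis using ai1 im unfolding memG_def by (intro exI[of _ "Suc i"]) auto
  qed
qed

lemma T_E2:
  assumes dec: "\<forall>i<m. a (Suc i) < a i" and inc: "\<forall>i<m. b i < b (Suc i)"
  and T: "j \<le> m" "\<forall>i<j. b (Suc i) = b i + 1" "\<forall>i. j \<le> i \<and> i < m \<longrightarrow> a i = a (Suc i) + 1"
  and mp: "memG a b m p s" and mq: "memG a b m q t" and eq: "p+s = q+t" and qp: "p < q"
  shows "memG a b m (p+1) (s-1)"
proof -
  obtain i where i: "i \<le> m" "a i \<le> p" "b i \<le> s" using mp by (auto simp: memG_def)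
  obtain k where k: "k \<le> m" "a k \<le> q" "b k \<le> t" using mq by (auto simp: memG_def)
  show ?thesis
  proof (cases "b i < s")
    case True then show ?thesis using i unfolding memG_def by (intro exI[of _ i]) auto
  next
    case False then have bi: "b i = s" using i by simp
    have ki: "k < i"
    proof (rule ccontr)
      assume "\<not> k < i"
      then have "b i \<le> b k" using inc_gap[OF inc, of i k] k by simp
      then show False using bi k qp eq by simp
    qed
    define h where "h = i - 1"
    have hi: "Suc h = i" using ki by (simp add: h_def)
    have hm: "h < m" using hi i by simp
    have "b h < b (Suc h)" using inc hm by blast
    then have bh: "b h < s" using hi bi by simp
    have "a h \<le> p + 1"
    proof (cases "j \<le> h")
      case True
      from hm have "a h = a (Suc h) + 1" using T(3) True by blast
      then have "a h = a i + 1" using hi by simp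
      then show ?thesis using i by simp
    next
      case False
      have st: "\<forall>r. k \<le> r \<and> r < i \<longrightarrow> b (Suc r) = b r + 1"
      proof (intro allI impI)
        fix r assume "k \<le> r \<and> r < i"
        then have "r < j" using False hi by simp
        then show "b (Suc r) = b r + 1" using T(2) by blast
      qed
      have "b i = b k + (i - k)" using b_steps[OF st] ki by simp
      moreover have "a h + (h - k) \<le> a k" using dec_gap[OF dec, of k h] ki hi i by simp
      ultimately show ?thesis using k eq bi ki hi by linarith
    qed
    then show ?thesis using bh hi i unfolding memG_def by (intro exI[of _ h]) auto
  qed
qed

lemma E_iff_T:
  assumes dec: "\<forall>i<m. a (Suc i) < a i" and inc: "\<forall>i<m. b i < b (Suc i)"
  shows "((\<forall>p s q t. memG a b m p s \<and> memG a b m q t \<and> p+s = q+t \<and> q < p \<longrightarrow> memG a b m (p-1) (s+1))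
      \<and> (\<forall>p s q t. memG a b m p s \<and> memG a b m q t \<and> p+s = q+t \<and> p < q \<longrightarrow> memG a b m (p+1) (s-1)))
    \<longleftrightarrow> Tcond a b m"
proof
  assume "(\<forall>p s q t. memG a b m p s \<and> memG a b m q t \<and> p+s = q+t \<and> q < p \<longrightarrow> memG a b m (p-1) (s+1))
      \<and> (\<forall>p s q t. memG a b m p s \<and> memG a b m q t \<and> p+s = q+t \<and> p < q \<longrightarrow> memG a b m (p+1) (s-1))"
  then have E1: "\<forall>p s q t. memG a b m p s \<and> memG a b m q t \<and> p+s = q+t \<and> q < p \<longrightarrow> memG a b m (p-1) (s+1)"
    by (rule conjunct1)
  show "Tcond a b m" by (rule E_T[OF dec inc E1])
next
  assume "Tcond a b m"
  then obtain j where T: "j \<le> m" "\<forall>i<j. b (Suc i) = b i + 1" "\<forall>i. j \<le> i \<and> i < m \<longrightarrow> a i = a (Suc i) + 1"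
    unfolding Tcond_def by blast
  show "(\<forall>p s q t. memG a b m p s \<and> memG a b m q t \<and> p+s = q+t \<and> q < p \<longrightarrow> memG a b m (p-1) (s+1))
      \<and> (\<forall>p s q t. memG a b m p s \<and> memG a b m q t \<and> p+s = q+t \<and> p < q \<longrightarrow> memG a b m (p+1) (s-1))"
  proof (intro conjI allI impI)
    fix p s q t assume h: "memG a b m p s \<and> memG a b m q t \<and> p+s = q+t \<and> q < p"
    show "memG a b m (p-1) (s+1)" by (rule T_E1[OF dec inc T, of p s q t]) (use h in auto)
  next
    fix p s q t assume h: "memG a b m p s \<and> memG a b m q t \<and> p+s = q+t \<and> p < q"
    show "memG a b m (p+1) (s-1)" by (rule T_E2[OF dec inc T, of p s q t]) (use h in auto)
  qed
qed

lemma antichain_gens: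
  assumes "\<forall>u\<in>S. \<forall>v\<in>S. mdvd u v \<longrightarrow> u = v"
  shows "gens (ideal_gen S) = S"
proof
  show "gens (ideal_gen S) \<subseteq> S"
  proof
    fix u assume u: "u \<in> gens (ideal_gen S)"
    then obtain w where w: "w \<in> S" "mdvd w u" by (auto simp: gens_def ideal_gen_def)
    have "w \<in> ideal_gen S" using w by (auto simp: ideal_gen_def mdvd_def)
    then have "w = u" using u w by (auto simp: gens_def)
    then show "u \<in> S" using w by simp
  qed
next
  show "S \<subseteq> gens (ideal_gen S)"
  proof
    fix u assume u: "u \<in> S"
    have "u \<in> ideal_gen S" using u by (auto simp: ideal_gen_def mdvd_def)
    moreover have "\<forall>v\<in>ideal_gen S. mdvd v u \<longrightarrow> v = u"
    proof (intro ballI impI)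
      fix v assume v: "v \<in> ideal_gen S" "mdvd v u"
      then obtain w where w: "w \<in> S" "mdvd w v" by (auto simp: ideal_gen_def)
      have "mdvd w u" using w v by (auto simp: mdvd_def)
      then have "w = u" using assms w u by blast
      then show "v = u" using w v by (auto simp: mdvd_def prod_eq_iff)
    qed
    ultimately show "u \<in> gens (ideal_gen S)" by (auto simp: gens_def)
  qed
qed

lemma ideal_gen_monomial: "is_monomial_ideal (ideal_gen S)"
  by (auto simp: is_monomial_ideal_def ideal_gen_def mdvd_def) (metis fst_conv snd_conv order_trans)

lemma cw_iff:
  assumes mi: "is_monomial_ideal I"
  shows "componentwise_polymatroidal I \<longleftrightarrow>
    (\<forall>u\<in>I. \<forall>v\<in>I. mdeg u = mdeg v \<longrightarrow> (\<forall>z. vdeg z v < vdeg z u \<longrightarrow>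
        (\<exists>w. vdeg w u < vdeg w v \<and> mul_var w (div_var z u) \<in> I)))"
proof -
  have gc: "\<And>j. gens (component I j) = {u\<in>I. mdeg u = j}"
    unfolding component_def
    by (rule antichain_gens) (auto simp: mdvd_def mdeg_def prod_eq_iff)
  have cm: "x \<in> component I j \<longleftrightarrow> x \<in> I" if xj: "mdeg x = j" for j x
  proof
    assume "x \<in> component I j"
    then obtain u where "u \<in> I" "mdvd u x" by (auto simp: component_def ideal_gen_def)
    then show "x \<in> I" using mi unfolding is_monomial_ideal_def by blast
  next
    assume "x \<in> I"
    then show "x \<in> component I j" using xj unfolding component_def ideal_gen_def
      by (intro CollectI bexI[of _ x]) (auto simp: mdvd_def)
  qed
  have dm: "\<And>z u w. vdeg z u > 0 \<Longrightarrow> mdeg (mul_var w (div_var z u)) = mdeg u"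
    by (auto simp: mdeg_def mul_var_def div_var_def vdeg_def)
  have A: "mul_var w (div_var z u) \<in> component I j \<longleftrightarrow> mul_var w (div_var z u) \<in> I"
    if "mdeg u = j" "vdeg z v < vdeg z u" for u v z w j
  proof -
    have "vdeg z u > 0" using that by simp
    then have "mdeg (mul_var w (div_var z u)) = j" using dm that by simp
    then show ?thesis by (rule cm)
  qed
  have pj: "polymatroidal (component I j) \<longleftrightarrow> (\<forall>u\<in>I. \<forall>v\<in>I. mdeg u = j \<longrightarrow> mdeg v = j \<longrightarrow>
       (\<forall>z. vdeg z v < vdeg z u \<longrightarrow> (\<exists>w. vdeg w u < vdeg w v \<and> mul_var w (div_var z u) \<in> I)))"
    (is "_ \<longleftrightarrow> ?R") for j
  proof -
    have D: "\<exists>d. \<forall>u\<in>{u\<in>I. mdeg u = j}. mdeg u = d" by auto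
    have X: "(\<forall>u\<in>{u\<in>I. mdeg u = j}. \<forall>v\<in>{u\<in>I. mdeg u = j}. \<forall>z. vdeg z v < vdeg z u \<longrightarrow>
        (\<exists>w. vdeg w u < vdeg w v \<and> mul_var w (div_var z u) \<in> component I j)) \<longleftrightarrow> ?R"
    proof
      assume L: "\<forall>u\<in>{u\<in>I. mdeg u = j}. \<forall>v\<in>{u\<in>I. mdeg u = j}. \<forall>z. vdeg z v < vdeg z u \<longrightarrow>
        (\<exists>w. vdeg w u < vdeg w v \<and> mul_var w (div_var z u) \<in> component I j)"
      show ?R
      proof (intro ballI impI allI)
        fix u v z assume h: "u \<in> I" "v \<in> I" "mdeg u = j" "mdeg v = j" "vdeg z v < vdeg z u"
        then obtain w where w: "vdeg w u < vdeg w v" "mul_var w (div_var z u) \<in> component I j"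
          using L by blast
        then show "\<exists>w. vdeg w u < vdeg w v \<and> mul_var w (div_var z u) \<in> I"
          using A[OF h(3) h(5)] by blast
      qed
    next
      assume R: ?R
      show "\<forall>u\<in>{u\<in>I. mdeg u = j}. \<forall>v\<in>{u\<in>I. mdeg u = j}. \<forall>z. vdeg z v < vdeg z u \<longrightarrow>
        (\<exists>w. vdeg w u < vdeg w v \<and> mul_var w (div_var z u) \<in> component I j)"
      proof (intro ballI impI allI)
        fix u v z assume u: "u \<in> {u\<in>I. mdeg u = j}" and v: "v \<in> {u\<in>I. mdeg u = j}"
          and z: "vdeg z v < vdeg z u"
        have h: "u \<in> I" "v \<in> I" "mdeg u = j" "mdeg v = j" using u v by auto
        then obtain w where w: "vdeg w u < vdeg w v" "mul_var w (div_var z u) \<in> I"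
          using R z by blast
        then show "\<exists>w. vdeg w u < vdeg w v \<and> mul_var w (div_var z u) \<in> component I j"
          using A[OF h(3) z] by blast
      qed
    qed
    show ?thesis unfolding polymatroidal_def gc by (simp only: D X simp_thms)
  qed
  show ?thesis
  proof
    assume c: "componentwise_polymatroidal I"
    show "\<forall>u\<in>I. \<forall>v\<in>I. mdeg u = mdeg v \<longrightarrow> (\<forall>z. vdeg z v < vdeg z u \<longrightarrow>
        (\<exists>w. vdeg w u < vdeg w v \<and> mul_var w (div_var z u) \<in> I))"
    proof (intro ballI impI allI)
      fix u v z assume u: "u \<in> I" and v: "v \<in> I" and d: "mdeg u = mdeg v" and z: "vdeg z v < vdeg z u"
      have "u \<in> component I (mdeg u)" using cm u by simp
      then have "component I (mdeg u) \<noteq> {}" by blast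
      then have "polymatroidal (component I (mdeg u))" using c by (simp add: componentwise_polymatroidal_def)
      then have "\<forall>u'\<in>I. \<forall>v'\<in>I. mdeg u' = mdeg u \<longrightarrow> mdeg v' = mdeg u \<longrightarrow>
       (\<forall>z. vdeg z v' < vdeg z u' \<longrightarrow> (\<exists>w. vdeg w u' < vdeg w v' \<and> mul_var w (div_var z u') \<in> I))"
        by (rule pj[THEN iffD1])
      from this[rule_format, OF u v refl d[symmetric] z]
      show "\<exists>w. vdeg w u < vdeg w v \<and> mul_var w (div_var z u) \<in> I" .
    qed
  next
    assume H: "\<forall>u\<in>I. \<forall>v\<in>I. mdeg u = mdeg v \<longrightarrow> (\<forall>z. vdeg z v < vdeg z u \<longrightarrow>
        (\<exists>w. vdeg w u < vdeg w v \<and> mul_var w (div_var z u) \<in> I))"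
    show "componentwise_polymatroidal I" unfolding componentwise_polymatroidal_def
    proof (intro allI impI)
      fix j
      have "\<forall>u\<in>I. \<forall>v\<in>I. mdeg u = j \<longrightarrow> mdeg v = j \<longrightarrow>
       (\<forall>z. vdeg z v < vdeg z u \<longrightarrow> (\<exists>w. vdeg w u < vdeg w v \<and> mul_var w (div_var z u) \<in> I))"
        using H by simp
      then show "polymatroidal (component I j)" by (rule pj[THEN iffD2])
    qed
  qed
qed

lemma exch_iff:
  "(\<forall>u\<in>I. \<forall>v\<in>I. mdeg u = mdeg v \<longrightarrow> (\<forall>z. vdeg z v < vdeg z u \<longrightarrow>
        (\<exists>w. vdeg w u < vdeg w v \<and> mul_var w (div_var z u) \<in> I)))
   \<longleftrightarrow> ((\<forall>p s q t. (p,s) \<in> I \<and> (q,t) \<in> I \<and> p+s = q+t \<and> q < p \<longrightarrow> (p-1, s+1) \<in> I)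
      \<and> (\<forall>p s q t. (p,s) \<in> I \<and> (q,t) \<in> I \<and> p+s = q+t \<and> p < q \<longrightarrow> (p+1, s-1) \<in> I))"
  (is "?L \<longleftrightarrow> ?R")
proof
  assume L: ?L
  show ?R
  proof (intro conjI allI impI)
    fix p s q t assume h: "(p,s) \<in> I \<and> (q,t) \<in> I \<and> p+s = q+t \<and> q < p"
    then obtain w where "vdeg w (p,s) < vdeg w (q,t)" "mul_var w (div_var True (p,s)) \<in> I"
      using L[rule_format, of "(p,s)" "(q,t)" True] by (auto simp: mdeg_def vdeg_def)
    then show "(p-1, s+1) \<in> I" using h by (cases w) (auto simp: vdeg_def mul_var_def div_var_def)
  next
    fix p s q t assume h: "(p,s) \<in> I \<and> (q,t) \<in> I \<and> p+s = q+t \<and> p < q"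
    then obtain w where "vdeg w (p,s) < vdeg w (q,t)" "mul_var w (div_var False (p,s)) \<in> I"
      using L[rule_format, of "(p,s)" "(q,t)" False] by (auto simp: mdeg_def vdeg_def)
    then show "(p+1, s-1) \<in> I" using h by (cases w) (auto simp: vdeg_def mul_var_def div_var_def)
  qed
next
  assume R: ?R
  show ?L
  proof (intro ballI impI allI)
    fix u v z assume u: "u \<in> I" and v: "v \<in> I" and d: "mdeg u = mdeg v" and z: "vdeg z v < vdeg z u"
    obtain p s where ps: "u = (p,s)" by force
    obtain q t where qt: "v = (q,t)" by force
    show "\<exists>w. vdeg w u < vdeg w v \<and> mul_var w (div_var z u) \<in> I"
    proof (cases z)
      case True
      have "q < p" using True z ps qt by (simp add: vdeg_def)
      then have "(p-1, s+1) \<in> I" using conjunct1[OF R, rule_format, of p s q t] u v d ps qt by (simp add: mdeg_def)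
      then show ?thesis using True ps qt d z
        by (intro exI[of _ False]) (auto simp: mdeg_def vdeg_def mul_var_def div_var_def)
    next
      case False
      have "t < s" using False z ps qt by (simp add: vdeg_def)
      then have "p < q" using d ps qt by (simp add: mdeg_def)
      then have "(p+1, s-1) \<in> I" using conjunct2[OF R, rule_format, of p s q t] u v d ps qt by (simp add: mdeg_def)
      then show ?thesis using False ps qt d z
        by (intro exI[of _ True]) (auto simp: mdeg_def vdeg_def mul_var_def div_var_def)
    qed
  qed
qed

lemma sorted_unique:
  fixes f g :: "nat \<Rightarrow> nat"
  assumes f: "\<forall>i<m. f i < f (Suc i)" and g: "\<forall>i<n. g i < g (Suc i)" and e: "f ` {..m} = g ` {..n}"
  shows "m = n \<and> (\<forall>i\<le>m. f i = g i)"
proof -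
  have fm: "f i < f k" if "i < k" "k \<le> m" for i k
  proof -
    have "f i + (k-i) \<le> f k" by (rule inc_gap[OF f]) (use that in auto)
    then show ?thesis using that by linarith
  qed
  have gm: "g i < g k" if "i < k" "k \<le> n" for i k
  proof -
    have "g i + (k-i) \<le> g k" by (rule inc_gap[OF g]) (use that in auto)
    then show ?thesis using that by linarith
  qed
  have sf: "sorted_wrt (<) (map f [0..<Suc m])"
    unfolding sorted_wrt_iff_nth_less by (auto simp del: upt_Suc intro: fm)
  have sg: "sorted_wrt (<) (map g [0..<Suc n])"
    unfolding sorted_wrt_iff_nth_less by (auto simp del: upt_Suc intro: gm)
  have e1: "{0..<Suc m} = {..m}" "{0..<Suc n} = {..n}" by auto
  have "set (map f [0..<Suc m]) = set (map g [0..<Suc n])"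
    unfolding set_map set_upt e1 by (rule e)
  then have eq: "map f [0..<Suc m] = map g [0..<Suc n]"
    using sf sg by (simp add: strict_sorted_iff sorted_distinct_set_unique del: upt_Suc)
  then have mn: "m = n" by (metis length_map length_upt diff_zero Suc_inject)
  have "\<forall>i\<le>m. f i = g i"
  proof (intro allI impI)
    fix i assume "i \<le> m"
    then have "map f [0..<Suc m] ! i = map g [0..<Suc n] ! i" using eq by simp
    then show "f i = g i" using \<open>i \<le> m\<close> mn by (simp del: upt_Suc)
  qed
  then show ?thesis using mn by simp
qed

theorem corollary2p7:
  fixes a b :: "nat \<Rightarrow> nat" and m :: nat and I J :: "mono set"
  assumes "\<forall>i<m. a (Suc i) < a i"
    and "\<forall>i<m. b i < b (Suc i)"
    and "I = ideal_gen {(a i, b i) | i. i \<le> m}"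
    and "gens I = {(a i, b i) | i. i \<le> m}"
    and "J = ideal_gen {(a i - a m, b i - b 0) | i. i \<le> m}"
  shows "componentwise_polymatroidal I \<longleftrightarrow> yx_tight J"
proof -
  note dec = assms(1) and inc = assms(2)
  have memI: "\<And>x. x \<in> I \<longleftrightarrow> memG a b m (fst x) (snd x)"
    using assms(3) by (auto simp: ideal_gen_def mdvd_def memG_def)
  have miI: "is_monomial_ideal I" using assms(3) ideal_gen_monomial by simp
  have step1: "componentwise_polymatroidal I \<longleftrightarrow> Tcond a b m"
  proof -
    have "componentwise_polymatroidal I \<longleftrightarrow>
      ((\<forall>p s q t. (p,s) \<in> I \<and> (q,t) \<in> I \<and> p+s = q+t \<and> q < p \<longrightarrow> (p-1, s+1) \<in> I)
      \<and> (\<forall>p s q t. (p,s) \<in> I \<and> (q,t) \<in> I \<and> p+s = q+t \<and> p < q \<longrightarrow> (p+1, s-1) \<in> I))"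
      by (simp only: cw_iff[OF miI] exch_iff)
    also have "\<dots> \<longleftrightarrow> ((\<forall>p s q t. memG a b m p s \<and> memG a b m q t \<and> p+s = q+t \<and> q < p \<longrightarrow> memG a b m (p-1) (s+1))
      \<and> (\<forall>p s q t. memG a b m p s \<and> memG a b m q t \<and> p+s = q+t \<and> p < q \<longrightarrow> memG a b m (p+1) (s-1)))"
      by (simp only: memI fst_conv snd_conv)
    also have "\<dots> \<longleftrightarrow> Tcond a b m" by (rule E_iff_T[OF dec inc])
    finally show ?thesis .
  qed
  define A where "A = (\<lambda>i. a i - a m)"
  define B where "B = (\<lambda>i. b i - b 0)"
  define S where "S = {(A i, B i) | i. i \<le> m}"
  have am: "a m \<le> a i" if "i \<le> m" for i using dec_gap[OF dec, of i m] that by simp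
  have b0: "b 0 \<le> b i" if "i \<le> m" for i using inc_gap[OF inc, of 0 i] that by simp
  have Alt: "A k < A i" if "i < k" "k \<le> m" for i k
  proof -
    have "a k + (k - i) \<le> a i" using dec_gap[OF dec, of i k] that by simp
    then show ?thesis using am[of k] that by (simp add: A_def)
  qed
  have Blt: "B i < B k" if "i < k" "k \<le> m" for i k
  proof -
    have "b i + (k - i) \<le> b k" using inc_gap[OF inc, of i k] that by simp
    then show ?thesis using b0[of i] that by (simp add: B_def)
  qed
  have Adec: "\<forall>i<m. A (Suc i) < A i" using Alt by simp
  have Binc: "\<forall>i<m. B i < B (Suc i)" using Blt by simp
  have JS: "J = ideal_gen S" using assms(5) by (simp add: S_def A_def B_def)
  have anti: "\<forall>u\<in>S. \<forall>v\<in>S. mdvd u v \<longrightarrow> u = v"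
  proof (intro ballI impI)
    fix u v assume u: "u \<in> S" and v: "v \<in> S" and d: "mdvd u v"
    obtain i where i: "i \<le> m" "u = (A i, B i)" using u by (auto simp: S_def)
    obtain k where k: "k \<le> m" "v = (A k, B k)" using v by (auto simp: S_def)
    have "i = k"
    proof (rule ccontr)
      assume "i \<noteq> k"
      then have "i < k \<or> k < i" by arith
      then show False
      proof
        assume "i < k" then have "A k < A i" using Alt k by simp
        then show False using d i k by (simp add: mdvd_def)
      next
        assume "k < i" then have "B k < B i" using Blt i by simp
        then show False using d i k by (simp add: mdvd_def)
      qed
    qed
    then show "u = v" using i k by simp
  qed
  have gJ: "gens J = S" using JS antichain_gens[OF anti] by simp
  have step2: "Tcond a b m \<longleftrightarrow> yx_tight J"
  proof
    assume "Tcond a b m"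
    then obtain j where T: "j \<le> m" "\<forall>i<j. b (Suc i) = b i + 1" "\<forall>i. j \<le> i \<and> i < m \<longrightarrow> a i = a (Suc i) + 1"
      unfolding Tcond_def by blast
    have Bi: "\<forall>i\<le>j. B i = i"
    proof (intro allI impI)
      fix i assume "i \<le> j"
      then have st: "\<forall>r. 0 \<le> r \<and> r < i \<longrightarrow> b (Suc r) = b r + 1" using T(2) by auto
      show "B i = i" using b_steps[OF st] by (simp add: B_def)
    qed
    have Ai: "\<forall>i\<le>m - j. A (m - i) = i"
    proof (intro allI impI)
      fix i assume h: "i \<le> m - j"
      then have st: "\<forall>r. m - i \<le> r \<and> r < m \<longrightarrow> a r = a (Suc r) + 1" using T(3) by auto
      have "a (m - i) = a m + (m - (m - i))" using a_steps[OF st] by simp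
      then show "A (m - i) = i" using h T(1) by (simp add: A_def)
    qed
    have ex: "\<exists>j\<le>m. (\<forall>i\<le>j. B i = i) \<and> (\<forall>i\<le>m - j. A (m - i) = i)" using T(1) Bi Ai by blast
    show "yx_tight J"
      unfolding yx_tight_def
    proof (rule conjI)
      show "is_monomial_ideal J" using JS ideal_gen_monomial by simp
      show "\<exists>m' \<alpha> \<beta>. gens J = {(\<alpha> i, \<beta> i) | i. i \<le> m'} \<and> J = ideal_gen (gens J) \<and>
        (\<forall>i<m'. \<alpha> (Suc i) < \<alpha> i) \<and> \<alpha> m' = 0 \<and>
        (\<forall>i<m'. \<beta> i < \<beta> (Suc i)) \<and> \<beta> 0 = 0 \<and>
        (\<exists>j\<le>m'. (\<forall>i\<le>j. \<beta> i = i) \<and> (\<forall>i\<le>m' - j. \<alpha> (m' - i) = i))"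
      proof (rule exI[of _ m], rule exI[of _ A], rule exI[of _ B], intro conjI)
        show "gens J = {(A i, B i) | i. i \<le> m}" using gJ by (simp add: S_def)
        show "J = ideal_gen (gens J)" using gJ JS by simp
        show "\<forall>i<m. A (Suc i) < A i" by (rule Adec)
        show "A m = 0" by (simp add: A_def)
        show "\<forall>i<m. B i < B (Suc i)" by (rule Binc)
        show "B 0 = 0" by (simp add: B_def)
        show "\<exists>j\<le>m. (\<forall>i\<le>j. B i = i) \<and> (\<forall>i\<le>m - j. A (m - i) = i)" by (rule ex)
      qed
    qed
  next
    assume "yx_tight J"
    then have "\<exists>m' \<alpha> \<beta>. gens J = {(\<alpha> i, \<beta> i) | i. i \<le> m'} \<and> J = ideal_gen (gens J) \<and>
        (\<forall>i<m'. \<alpha> (Suc i) < \<alpha> i) \<and> \<alpha> m' = 0 \<and>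
        (\<forall>i<m'. \<beta> i < \<beta> (Suc i)) \<and> \<beta> 0 = 0 \<and>
        (\<exists>j\<le>m'. (\<forall>i\<le>j. \<beta> i = i) \<and> (\<forall>i\<le>m' - j. \<alpha> (m' - i) = i))"
      unfolding yx_tight_def by (rule conjunct2)
    then obtain m' \<alpha> \<beta> where H: "gens J = {(\<alpha> i, \<beta> i) | i. i \<le> m'} \<and> J = ideal_gen (gens J) \<and>
        (\<forall>i<m'. \<alpha> (Suc i) < \<alpha> i) \<and> \<alpha> m' = 0 \<and>
        (\<forall>i<m'. \<beta> i < \<beta> (Suc i)) \<and> \<beta> 0 = 0 \<and>
        (\<exists>j\<le>m'. (\<forall>i\<le>j. \<beta> i = i) \<and> (\<forall>i\<le>m' - j. \<alpha> (m' - i) = i))"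
      by (elim exE)
    have G: "gens J = {(\<alpha> i, \<beta> i) | i. i \<le> m'}" using H by (rule conjunct1)
    have ad: "\<forall>i<m'. \<beta> i < \<beta> (Suc i)" using H by blast
    have "\<exists>j\<le>m'. (\<forall>i\<le>j. \<beta> i = i) \<and> (\<forall>i\<le>m' - j. \<alpha> (m' - i) = i)" using H by blast
    then obtain j where jm: "j \<le> m'" and tb: "\<forall>i\<le>j. \<beta> i = i" and ta: "\<forall>i\<le>m' - j. \<alpha> (m' - i) = i"
      by blast
    have SG: "S = {(\<alpha> i, \<beta> i) | i. i \<le> m'}" using G gJ by simp
    have "snd ` S = B ` {..m}" by (auto simp: S_def image_def)
    moreover have "snd ` S = \<beta> ` {..m'}" unfolding SG by (auto simp: image_def)
    ultimately have "B ` {..m} = \<beta> ` {..m'}" by simp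
    then have su: "m = m' \<and> (\<forall>i\<le>m. B i = \<beta> i)" by (rule sorted_unique[OF Binc ad])
    have Binj: "i = k" if "i \<le> m" "k \<le> m" "B i = B k" for i k
    proof (rule ccontr)
      assume "i \<noteq> k"
      then have "i < k \<or> k < i" by arith
      then show False
      proof
        assume "i < k" then show False using Blt[of i k] that by simp
      next
        assume "k < i" then show False using Blt[of k i] that by simp
      qed
    qed
    have al: "A i = \<alpha> i" if "i \<le> m" for i
    proof -
      have "(A i, B i) \<in> S" using that by (auto simp: S_def)
      then obtain l where l: "l \<le> m'" "A i = \<alpha> l" "B i = \<beta> l" unfolding SG by blast
      have "B i = B l" using l su by simp
      then have "l = i" using Binj l su that by simp
      then show ?thesis using l by simp
    qed
    have tb': "\<forall>i\<le>j. B i = i" using tb su jm by simp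
    have ta': "\<forall>i\<le>m - j. A (m - i) = i" using ta su al by simp
    show "Tcond a b m"
      unfolding Tcond_def
    proof (intro exI conjI allI impI)
      show "j \<le> m" using jm su by simp
    next
      fix i assume i: "i < j"
      have "B (Suc i) = Suc i" "B i = i" using tb' i by auto
      moreover have "b 0 \<le> b i" "b 0 \<le> b (Suc i)" using b0 i jm su by auto
      ultimately show "b (Suc i) = b i + 1" by (simp add: B_def)
    next
      fix i assume i: "j \<le> i \<and> i < m"
      have "m - i \<le> m - j" "m - Suc i \<le> m - j" using i by arith+
      then have "A (m - (m - i)) = m - i" "A (m - (m - Suc i)) = m - Suc i" using ta' by auto
      then have "A i = m - i" "A (Suc i) = m - Suc i" using i by (simp_all add: Suc_diff_Suc)
      moreover have "a m \<le> a i" "a m \<le> a (Suc i)" using am i by auto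
      moreover have "m - i = Suc (m - Suc i)" using i by arith
      ultimately show "a i = a (Suc i) + 1" using i by (simp add: A_def)
    qed
  qed
  show ?thesis using step1 step2 by simp
qed

end
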